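(* Let $s\ge2$, $k\ge1$ and $s_0$ be integers with $0\le s_0<\min\{k,s\}$. Let $n=sk+s_0$, $d_c=\lfloor n/s\rfloor=k$, $d_o=\lfloor(n-1)/(s-1)\rfloor$, and let $$g(s,k,s_0)=\frac{\gamma_{cc}}{\gamma_{MBR,o}},\qquad \gamma_{MBR,o}=\frac{2d_oM}{2kd_o-k^2+k},$$ where $\gamma_{cc}$ is the repair bandwidth of the Cubic Code for the Fixed Cluster Repair System with parameters $(n,k,s)$ storing a file of size $M$. Then $$g(s,k,s_0)\le\frac{1}{2(1-e^{-1})}\cdot\frac{(s+3)k+s-3}{(s+1)k-1}.$$
   Context: FCRS with parameters $(n,k,s)$: $n=ds+s_0$ servers, $d=\lfloor n/s\rfloor$ (here $d=d_c=k$), clusters $1,\dots,s$ of size $d$ and cluster $s+1$ of size $s_0$; any $k$ servers recover the file; a failed server in cluster $r$ is repaired by downloading from all $d$ servers of a cluster $i\in[s]$, $i\ne r$. Cubic Code: encode $m$ file chunks (each of size $M/m$) with a $(d^{s+1},m)$ MDS code with symbols $C_b$ indexed by $b=b_{s+1}\cdots b_1$, $b_i\in[d]$; server $(i,j)$ stores $\{C_b:b_i=j\}$; to repair $(r,\ell)$ from cluster $i$, server $(i,j)$ sends $\{C_b:b_i=j,b_r=\ell\}$; $m=\min\{d^{s+1}-\prod_{i=1}^{s+1}(d-k_i):k_i\ge0,\ \sum_i k_i=k,\ k_{s+1}\le s_0\}$. Thus $\gamma_{cc}=Md^s/m$. *)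

theory Defs
  imports Complex_Main
begin

text \<open>Cubic Code for FCRS with parameters (n,k,s), n = d s + s0, d = d_c = k.\<close>

definition cubic_m :: "nat \<Rightarrow> nat \<Rightarrow> nat \<Rightarrow> nat \<Rightarrow> nat" where
  "cubic_m d s k s0 = Min {d ^ (s+1) - (\<Prod>i\<in>{1..s+1}. (d - kk i)) | kk.
       (\<forall>i. i \<notin> {1..s+1} \<longrightarrow> kk i = 0) \<and> (\<Sum>i\<in>{1..s+1}. kk i) = k \<and> kk (s+1) \<le> s0}"

definition gamma_cc :: "real \<Rightarrow> nat \<Rightarrow> nat \<Rightarrow> nat \<Rightarrow> nat \<Rightarrow> real" where
  "gamma_cc M d s k s0 = M * real d ^ s / real (cubic_m d s k s0)"

definition gamma_MBR_o :: "real \<Rightarrow> nat \<Rightarrow> nat \<Rightarrow> real" where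
  "gamma_MBR_o M k d_o = 2 * real d_o * M / (2 * real k * real d_o - real k ^ 2 + real k)"

end

theory Submission
  imports Defs "HOL-Analysis.Convex"
begin

lemma amgm_pow:
  fixes x :: "nat \<Rightarrow> real"
  assumes "finite S" "S \<noteq> {}" "\<And>i. i \<in> S \<Longrightarrow> x i \<ge> 0"
  shows "(\<Prod>i\<in>S. x i) \<le> ((\<Sum>i\<in>S. x i) / card S) ^ card S"
proof -
  have P0: "(\<Prod>i\<in>S. x i) \<ge> 0" using assms(3) by (simp add: prod_nonneg)
  have c: "card S > 0" using assms by (simp add: card_gt_0_iff)
  have h: "(\<Prod>i\<in>S. x i) powr (1 / card S) \<le> (\<Sum>i\<in>S. x i / card S)"
    using arith_geom_mean[OF assms] .
  have e: "(\<Sum>i\<in>S. x i / card S) = (\<Sum>i\<in>S. x i) / card S"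
    by (simp add: sum_divide_distrib)
  have "(\<Prod>i\<in>S. x i) = ((\<Prod>i\<in>S. x i) powr (1 / card S)) ^ card S"
  proof (cases "(\<Prod>i\<in>S. x i) = 0")
    case True
    then show ?thesis using c by simp
  next
    case False
    then have pp: "(\<Prod>i\<in>S. x i) > 0" using P0 by simp
    have "((\<Prod>i\<in>S. x i) powr (1 / card S)) ^ card S = ((\<Prod>i\<in>S. x i) powr (1 / card S)) powr real (card S)"
      using pp by (simp add: powr_realpow)
    also have "\<dots> = (\<Prod>i\<in>S. x i)" using c P0 by (simp add: powr_powr)
    finally show ?thesis by simp
  qed
  also have "\<dots> \<le> ((\<Sum>i\<in>S. x i) / card S) ^ card S"
    by (rule power_mono) (use h e in auto)
  finally show ?thesis .
qed

lemma exp_bound: "(real s / (real s + 1)) ^ (s+1) \<le> exp (-1)"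
proof -
  have "real s / (real s + 1) = 1 + (- 1 / (real s + 1))" by (simp add: field_simps)
  also have "\<dots> \<le> exp (- 1 / (real s + 1))" by (rule exp_ge_add_one_self)
  finally have a: "real s / (real s + 1) \<le> exp (- 1 / (real s + 1))" .
  have "(real s / (real s + 1)) ^ (s+1) \<le> exp (- 1 / (real s + 1)) ^ (s+1)"
    by (rule power_mono[OF a]) simp
  also have "\<dots> = exp (real (s+1) * (- 1 / (real s + 1)))"
    by (simp only: exp_of_nat_mult)
  also have "real (s+1) * (- 1 / (real s + 1)) = -1" by (simp add: field_simps)
  finally show ?thesis .
qed

lemma m_bound:
  assumes "k \<ge> 1" "s \<ge> 1"
  shows "real (cubic_m k s k s0) \<ge> real k ^ (s+1) * (1 - exp (-1))"
proof -
  let ?A = "{k ^ (s+1) - (\<Prod>i\<in>{1..s+1}. (k - kk i)) | kk.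
       (\<forall>i. i \<notin> {1..s+1} \<longrightarrow> kk i = 0) \<and> (\<Sum>i\<in>{1..s+1}. kk i) = k \<and> kk (s+1) \<le> s0}"
  have fin: "finite ?A" by (rule finite_subset[of _ "{..k^(s+1)}"]) auto
  have ne: "?A \<noteq> {}"
  proof -
    let ?kk = "\<lambda>i::nat. if i = 1 then k else 0"
    have "(\<Sum>i\<in>{1..s+1}. ?kk i) = k" by (simp add: sum.delta)
    then have "k ^ (s+1) - (\<Prod>i\<in>{1..s+1}. (k - ?kk i)) \<in> ?A"
      using assms(2) by (intro CollectI exI[of _ ?kk]) simp
    then show ?thesis by blast
  qed
  have "cubic_m k s k s0 \<in> ?A" unfolding cubic_m_def by (rule Min_in[OF fin ne])
  then obtain kk where m: "cubic_m k s k s0 = k ^ (s+1) - (\<Prod>i\<in>{1..s+1}. (k - kk i))"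
    and sk: "(\<Sum>i\<in>{1..s+1}. kk i) = k" by blast
  have le: "kk i \<le> k" if "i \<in> {1..s+1}" for i
    using member_le_sum[of i "{1..s+1::nat}" kk] that sk by simp
  have pl: "(\<Prod>i\<in>{1..s+1}. (k - kk i)) \<le> k ^ (s+1)"
  proof -
    have "(\<Prod>i\<in>{1..s+1}. (k - kk i)) \<le> (\<Prod>i\<in>{1..s+1::nat}. k)"
      by (rule prod_mono) auto
    then show ?thesis by simp
  qed
  have rp: "real (\<Prod>i\<in>{1..s+1}. (k - kk i)) = (\<Prod>i\<in>{1..s+1}. real (k - kk i))" by simp
  have rs: "(\<Sum>i\<in>{1..s+1}. real (k - kk i)) = real s * real k"
  proof -
    have "(\<Sum>i\<in>{1..s+1}. real (k - kk i)) = (\<Sum>i\<in>{1..s+1}. real k - real (kk i))"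
      by (rule sum.cong) (auto simp: le of_nat_diff)
    also have "\<dots> = real (s+1) * real k - real k"
      by (simp add: sum_subtractf sk[symmetric])
    finally show ?thesis by (simp add: algebra_simps)
  qed
  have "(\<Prod>i\<in>{1..s+1}. real (k - kk i)) \<le> ((real s * real k) / real (s+1)) ^ (s+1)"
    using amgm_pow[of "{1..s+1}" "\<lambda>i. real (k - kk i)"] rs by simp
  also have "\<dots> = real k ^ (s+1) * (real s / (real s + 1)) ^ (s+1)"
  proof -
    have "(real s * real k) / real (s+1) = real k * (real s / (real s + 1))" by (simp add: algebra_simps)
    then show ?thesis by (simp only: power_mult_distrib)
  qed
  also have "\<dots> \<le> real k ^ (s+1) * exp (-1)"
    by (rule mult_left_mono[OF exp_bound]) simp
  finally have pb: "(\<Prod>i\<in>{1..s+1}. real (k - kk i)) \<le> real k ^ (s+1) * exp (-1)" .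
  have "real (cubic_m k s k s0) = real k ^ (s+1) - (\<Prod>i\<in>{1..s+1}. real (k - kk i))"
    using m pl rp by (simp add: of_nat_diff)
  then show ?thesis using pb by (simp add: algebra_simps)
qed

theorem proposition2:
  fixes s k s0 n d_c d_o :: nat and M :: real
  assumes "s \<ge> 2" and "k \<ge> 1" and "s0 < min k s"
    and "n = s * k + s0" and "d_c = n div s" and "d_o = (n - 1) div (s - 1)"
    and "M > 0"
  shows "gamma_cc M d_c s k s0 / gamma_MBR_o M k d_o
         \<le> 1 / (2 * (1 - exp (-1))) * (((real s + 3) * real k + real s - 3) / ((real s + 1) * real k - 1))"
proof -
  have dc: "d_c = k" using assms(3,4,5) by simp
  have s1: "s - 1 > 0" using assms(1) by simp
  have dl: "d_o * (s - 1) \<le> n - 1" unfolding assms(6) by (rule div_times_less_eq_dividend)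
  have "k * (s - 1) \<le> n - 1" using assms(1,2,4) by (simp add: algebra_simps diff_mult_distrib2)
  then have kd: "k \<le> d_o" unfolding assms(6) using s1 by (simp add: less_eq_div_iff_mult_less_eq)
  have s0k: "s0 + 1 \<le> k" using assms(3) by simp
  have nb: "n - 1 \<le> (s + 1) * k - 2" unfolding assms(4) using s0k by (simp add: algebra_simps)
  have dl2: "real d_o * (real s - 1) \<le> (real s + 1) * real k - 2"
  proof -
    have "d_o * (s - 1) \<le> (s + 1) * k - 2" using dl nb by linarith
    then have "real (d_o * (s - 1)) \<le> real ((s + 1) * k - 2)" by linarith
    moreover have "(s+1)*k \<ge> 2" using assms(1,2) by (metis add_le_mono le_add1 mult_le_mono nat_mult_1_right one_add_one order_trans)
    ultimately show ?thesis using assms(1) by (simp add: of_nat_diff algebra_simps)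
  qed
  define K where "K = real k"
  define D where "D = real d_o"
  define c where "c = 1 - exp (-1::real)"
  define m where "m = real (cubic_m k s k s0)"
  have c0: "c > 0" unfolding c_def by simp
  have K1: "K \<ge> 1" using assms(2) unfolding K_def by simp
  have KD: "K \<le> D" using kd unfolding K_def D_def by simp
  have mb: "m \<ge> K ^ (s+1) * c" unfolding m_def K_def c_def by (rule m_bound) (use assms(1,2) in auto)
  have Ks: "K ^ s > 0" using K1 by simp
  have m0: "m > 0" using mb Ks c0 K1 by (smt (verit) mult_pos_pos power_Suc zero_less_power)
  have g1: "gamma_cc M d_c s k s0 = M * K ^ s / m" unfolding gamma_cc_def dc K_def m_def by simp
  have g2: "gamma_MBR_o M k d_o = 2 * D * M / (K * (2 * D - K + 1))"
    unfolding gamma_MBR_o_def K_def D_def by (simp add: algebra_simps power2_eq_square)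
  have pos: "2 * D - K + 1 > 0" using KD K1 by simp
  have r1: "gamma_cc M d_c s k s0 / gamma_MBR_o M k d_o = (K ^ s / m) * (K * (2 * D - K + 1) / (2 * D))"
  proof -
    have D0: "D > 0" using KD K1 by simp
    show ?thesis unfolding g1 g2 using assms(7) D0 m0 pos K1 by (simp add: field_simps)
  qed
  have "K ^ s / m \<le> K ^ s / (K ^ (s+1) * c)"
    by (rule divide_left_mono[OF mb]) (use Ks c0 K1 m0 in auto)
  also have "\<dots> = 1 / (K * c)" using K1 by (simp add: field_simps)
  finally have b1: "K ^ s / m \<le> 1 / (K * c)" .
  have "(K ^ s / m) * (K * (2 * D - K + 1) / (2 * D)) \<le> 1 / (K * c) * (K * (2 * D - K + 1) / (2 * D))"
    by (rule mult_right_mono[OF b1]) (use pos KD K1 in auto)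
  also have "\<dots> = 1 / (2 * c) * ((2 * D - K + 1) / D)" using K1 c0 KD by (simp add: field_simps)
  also have "\<dots> \<le> 1 / (2 * c) * (((real s + 3) * K + real s - 3) / ((real s + 1) * K - 1))"
  proof (rule mult_left_mono)
    show "0 \<le> 1 / (2 * c)" using c0 by simp
    have "(real s + 1) * K \<ge> real s + 1" using mult_left_mono[of 1 K "real s + 1"] K1 by simp
    moreover have "real s \<ge> 2" using assms(1) by simp
    ultimately have den: "(real s + 1) * K - 1 > 0" by linarith
    have dl3: "D * (real s - 1) \<le> (real s + 1) * K - 2" using dl2 unfolding D_def K_def .
    have "(K - 1) * (D * (real s - 1)) \<le> (K - 1) * ((real s + 1) * K - 1)"
      by (rule mult_left_mono) (use dl3 K1 in auto)
    then have "(2 * D - K + 1) * ((real s + 1) * K - 1) \<le> ((real s + 3) * K + real s - 3) * D"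
      by (simp add: algebra_simps)
    then show "(2 * D - K + 1) / D \<le> ((real s + 3) * K + real s - 3) / ((real s + 1) * K - 1)"
      using den KD K1 by (simp add: divide_simps)
  qed
  finally show ?thesis unfolding r1 c_def K_def .
qed

end
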